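(* Let $Q$ be an $n\times n$ real symmetric matrix, $\Delta_n := \{x \in \mathbb{R}^n : x \ge 0,\ \sum_j x_j = 1\}$, $\nu(Q) := \min_{x\in\Delta_n} x^TQx$, let $\ell$ be any lower bound on $\nu(Q)$, let $M_j = \max_{i=1,\ldots,n} Q_{ij} - \ell$ and let $U_j \ge M_j$ for $j = 1,\ldots,n$. Let $e_j$ denote the $j$-th unit vector and $e$ the all-ones vector in $\mathbb{R}^n$. Consider the two mixed integer linear programs (MILP1), in variables $x,s\in\mathbb{R}^n$, $y\in\{0,1\}^n$, $\lambda\in\mathbb{R}$: \[ \min\ \lambda\ \text{ s.t. } Qx - \lambda e - s = 0,\ e^Tx = 1,\ x_j \le y_j,\ s_j \le M_j(1-y_j)\ (j=1,\ldots,n),\ x\ge 0,\ s \ge 0,\ y_j\in\{0,1\}; \] (MILP2), in variables $x,z\in\mathbb{R}^n$, $y\in\{0,1\}^n$, $\alpha\in\mathbb{R}$: \[ \min\ \alpha\ \text{ s.t. } e_j^TQx \le \alpha + z_j,\ e^Tx = 1,\ x_j \le y_j,\ z_j \le U_j(1-y_j)\ (j=1,\ldots,n),\ x\ge 0,\ z\ge 0,\ y_j\in\{0,1\}. \] Then the inequalities \[ y_i + y_j \le 1 \quad \text{for all } 1 \le i < j \le n \text{ with } Q_{ii} + Q_{jj} - 2Q_{ij} \le 0 \] are valid for both (MILP1) and (MILP2), i.e., adding them to either formulation does not change its optimal value $\nu(Q)$. *)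

theory Defs
  imports "HOL-Analysis.Analysis"
begin

definition std_simplex :: "(real ^ 'n) set" where
  "std_simplex = {x. (\<forall>j. x $ j \<ge> 0) \<and> (\<Sum>j\<in>UNIV. x $ j) = 1}"

definition nu :: "real ^ 'n ^ 'n \<Rightarrow> real" where
  "nu Q = Inf {x \<bullet> (Q *v x) | x. x \<in> std_simplex}"

definition Mbound :: "real ^ 'n ^ 'n \<Rightarrow> real \<Rightarrow> 'n \<Rightarrow> real" where
  "Mbound Q l j = Max {Q $ i $ j | i. True} - l"

definition milp1_feasible ::
  "real ^ 'n ^ 'n \<Rightarrow> ('n \<Rightarrow> real) \<Rightarrow> real ^ 'n \<Rightarrow> real ^ 'n \<Rightarrow> real ^ 'n \<Rightarrow> real \<Rightarrow> bool" where
  "milp1_feasible Q M x s y lam \<longleftrightarrow>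
     Q *v x - lam *\<^sub>R (\<chi> j. 1) - s = 0 \<and>
     (\<Sum>j\<in>UNIV. x $ j) = 1 \<and>
     (\<forall>j. x $ j \<le> y $ j) \<and>
     (\<forall>j. s $ j \<le> M j * (1 - y $ j)) \<and>
     (\<forall>j. x $ j \<ge> 0) \<and> (\<forall>j. s $ j \<ge> 0) \<and>
     (\<forall>j. y $ j \<in> {0, 1})"

definition milp2_feasible ::
  "real ^ 'n ^ 'n \<Rightarrow> ('n \<Rightarrow> real) \<Rightarrow> real ^ 'n \<Rightarrow> real ^ 'n \<Rightarrow> real ^ 'n \<Rightarrow> real \<Rightarrow> bool" where
  "milp2_feasible Q U x z y alpha \<longleftrightarrow>
     (\<forall>j. (Q *v x) $ j \<le> alpha + z $ j) \<and>
     (\<Sum>j\<in>UNIV. x $ j) = 1 \<and>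
     (\<forall>j. x $ j \<le> y $ j) \<and>
     (\<forall>j. z $ j \<le> U j * (1 - y $ j)) \<and>
     (\<forall>j. x $ j \<ge> 0) \<and> (\<forall>j. z $ j \<ge> 0) \<and>
     (\<forall>j. y $ j \<in> {0, 1})"

text \<open>The cuts y_i + y_j \<le> 1 for i < j with Q_ii + Q_jj - 2 Q_ij \<le> 0
  (stated for i \<noteq> j; both the condition and the cut are symmetric in i, j
  since Q is symmetric).\<close>
definition cuts :: "real ^ 'n ^ 'n \<Rightarrow> real ^ 'n \<Rightarrow> bool" where
  "cuts Q y \<longleftrightarrow> (\<forall>i j. i \<noteq> j \<and> Q $ i $ i + Q $ j $ j - 2 * Q $ i $ j \<le> 0
                      \<longrightarrow> y $ i + y $ j \<le> 1)"

definition is_min_value :: "real set \<Rightarrow> real \<Rightarrow> bool" where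
  "is_min_value S v \<longleftrightarrow> v \<in> S \<and> (\<forall>w\<in>S. v \<le> w)"

end

theory Submission
  imports Defs
begin

lemma symQ_comp: fixes Q :: "real^'n^'n" assumes "transpose Q = Q" shows "Q$i$j = Q$j$i"
proof -
  have "Q$i$j = transpose Q $ i $ j" using assms by simp
  thus ?thesis by (simp add: transpose_def)
qed

lemma bil_sym: fixes Q :: "real^'n^'n" assumes "transpose Q = Q"
  shows "u \<bullet> (Q *v v) = v \<bullet> (Q *v u)"
proof -
  have "u \<bullet> (Q *v v) = (\<Sum>i\<in>UNIV. \<Sum>k\<in>UNIV. u$i * Q$i$k * v$k)"
    by (simp add: inner_vec_def matrix_vector_mul_component sum_distrib_left mult.assoc)
  also have "\<dots> = (\<Sum>k\<in>UNIV. \<Sum>i\<in>UNIV. u$i * Q$i$k * v$k)" by (rule sum.swap)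
  also have "\<dots> = v \<bullet> (Q *v u)"
    by (simp add: inner_vec_def matrix_vector_mul_component sum_distrib_left symQ_comp[OF assms, of _ k for k] mult_ac)
  finally show ?thesis .
qed

lemma expand: fixes Q :: "real^'n^'n" assumes "transpose Q = Q"
  shows "(x + t *\<^sub>R w) \<bullet> (Q *v (x + t *\<^sub>R w)) = x \<bullet> (Q *v x) + 2 * t * (w \<bullet> (Q *v x)) + t^2 * (w \<bullet> (Q *v w))"
  using bil_sym[OF assms, of x w]
  by (simp add: inner_add_left inner_add_right matrix_vector_right_distrib algebra_simps power2_eq_square)

lemma fw: fixes Q :: "real^'n^'n" assumes "transpose Q = Q"
  shows "(axis i 1 - axis j 1) \<bullet> (Q *v (axis i 1 - axis j 1)) = Q$i$i + Q$j$j - 2 * Q$i$j"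
  using symQ_comp[OF assms, of i j]
  by (simp add: matrix_vector_mult_diff_distrib matrix_vector_mult_basis inner_diff_left inner_axis' column_def)

lemma sum_axis: "(\<Sum>k\<in>UNIV. (axis j (1::real) :: real^'n) $ k) = 1"
  by (simp add: axis_def)

lemma compact_simplex: "compact (std_simplex :: (real^'n) set)"
proof -
  have cl: "closed (std_simplex :: (real^'n) set)"
  proof -
    have "std_simplex = (\<Inter>j. {x::real^'n. 0 \<le> x $ j}) \<inter> {x. (\<Sum>j\<in>UNIV. x $ j) = 1}"
      by (auto simp: std_simplex_def)
    moreover have "closed {x::real^'n. 0 \<le> x $ j}" for j
      by (intro closed_Collect_le continuous_intros)
    moreover have "closed {x::real^'n. (\<Sum>j\<in>UNIV. x $ j) = 1}"
      by (intro closed_Collect_eq continuous_intros)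
    ultimately show ?thesis by (metis (no_types) closed_INT closed_Int)
  qed
  have "bounded (std_simplex :: (real^'n) set)"
    unfolding bounded_iff
  proof (intro exI ballI)
    fix x :: "real^'n" assume x: "x \<in> std_simplex"
    have "norm x \<le> (\<Sum>i\<in>UNIV. \<bar>x $ i\<bar>)" by (rule norm_le_l1_cart)
    also have "\<dots> = 1" using x by (simp add: std_simplex_def)
    finally show "norm x \<le> 1" .
  qed
  with cl show ?thesis by (simp add: compact_eq_bounded_closed)
qed

lemma axis_simplex: "axis j 1 \<in> std_simplex"
  by (simp add: std_simplex_def sum_axis) (simp add: axis_def)

lemma simplex_le1: "x \<in> std_simplex \<Longrightarrow> x $ j \<le> 1"
proof -
  assume x: "x \<in> std_simplex"
  have "x $ j \<le> (\<Sum>k\<in>UNIV. x $ k)"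
    by (rule member_le_sum) (use x in \<open>auto simp: std_simplex_def\<close>)
  thus ?thesis using x by (simp add: std_simplex_def)
qed

lemma kkt:
  fixes Q :: "real^'n^'n"
  assumes symQ: "transpose Q = Q" and x: "x \<in> std_simplex"
    and mn: "\<forall>y\<in>std_simplex. x \<bullet> (Q *v x) \<le> y \<bullet> (Q *v y)"
  shows "(Q *v x) $ j \<ge> x \<bullet> (Q *v x)"
proof (rule ccontr)
  define fx where "fx = x \<bullet> (Q *v x)"
  define w where "w = axis j 1 - x"
  define g where "g = (Q *v x) $ j - fx"
  define C where "C = w \<bullet> (Q *v w)"
  assume "\<not> ?thesis"
  hence g: "g < 0" by (simp add: g_def fx_def)
  have wg: "w \<bullet> (Q *v x) = g"
    by (simp add: w_def g_def fx_def inner_diff_left inner_axis')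
  define t where "t = min 1 (- g / (\<bar>C\<bar> + 1))"
  have "- g / (\<bar>C\<bar> + 1) > 0" using g by (intro divide_pos_pos) auto
  hence t0: "t > 0" by (simp add: t_def)
  have t1: "t \<le> 1" by (simp add: t_def)
  have "t \<le> - g / (\<bar>C\<bar> + 1)" by (simp add: t_def)
  hence "t * (\<bar>C\<bar> + 1) \<le> - g / (\<bar>C\<bar> + 1) * (\<bar>C\<bar> + 1)"
    by (rule mult_right_mono) auto
  also have "- g / (\<bar>C\<bar> + 1) * (\<bar>C\<bar> + 1) = - g"
  proof -
    have "\<bar>C\<bar> + 1 > 0" by (rule add_nonneg_pos) auto
    thus ?thesis by simp
  qed
  finally have tCg: "t * (\<bar>C\<bar> + 1) \<le> - g" .
  have "t * C \<le> t * \<bar>C\<bar>" using t0 by (intro mult_left_mono) auto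
  moreover have "t * (\<bar>C\<bar> + 1) = t * \<bar>C\<bar> + t" by (simp add: distrib_left)
  ultimately have tC: "t * C < - g" using tCg t0 by linarith
  have mem: "x + t *\<^sub>R w \<in> std_simplex"
  proof -
    have "x + t *\<^sub>R w = (1 - t) *\<^sub>R x + t *\<^sub>R axis j 1" by (simp add: w_def algebra_simps)
    moreover have "(\<Sum>k\<in>UNIV. ((1 - t) *\<^sub>R x + t *\<^sub>R axis j 1) $ k) = 1"
      using x by (simp add: sum.distrib sum_distrib_left[symmetric] sum_axis std_simplex_def)
    moreover have "((1 - t) *\<^sub>R x + t *\<^sub>R axis j 1) $ k \<ge> 0" for k
      using x t0 t1 by (auto simp: std_simplex_def axis_def)
    ultimately show ?thesis by (simp add: std_simplex_def)
  qed
  have "fx \<le> fx + 2 * t * g + t^2 * C"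
  proof -
    have "fx \<le> (x + t *\<^sub>R w) \<bullet> (Q *v (x + t *\<^sub>R w))" using mn mem by (simp add: fx_def)
    thus ?thesis using expand[OF symQ, of x t w] by (simp add: fx_def wg C_def)
  qed
  hence "0 \<le> t * (2 * g + t * C)" by (simp add: algebra_simps power2_eq_square)
  hence "0 \<le> 2 * g + t * C" using t0 by (simp add: zero_le_mult_iff)
  with tC g show False by linarith
qed

lemma support_eq:
  fixes Q :: "real^'n^'n"
  assumes symQ: "transpose Q = Q" and x: "x \<in> std_simplex"
    and mn: "\<forall>y\<in>std_simplex. x \<bullet> (Q *v x) \<le> y \<bullet> (Q *v y)"
    and pos: "x $ j > 0"
  shows "(Q *v x) $ j = x \<bullet> (Q *v x)"
proof -
  define fx where "fx = x \<bullet> (Q *v x)"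
  have ge: "\<And>k. (Q *v x) $ k - fx \<ge> 0" using kkt[OF symQ x mn] by (simp add: fx_def)
  have "(\<Sum>k\<in>UNIV. x $ k * ((Q *v x) $ k - fx)) = (\<Sum>k\<in>UNIV. x $ k * (Q *v x) $ k) - (\<Sum>k\<in>UNIV. x $ k) * fx"
    by (simp add: right_diff_distrib sum_subtractf sum_distrib_right)
  also have "(\<Sum>k\<in>UNIV. x $ k * (Q *v x) $ k) = fx" by (simp add: fx_def inner_vec_def)
  also have "fx - (\<Sum>k\<in>UNIV. x $ k) * fx = fx - fx * (\<Sum>k\<in>UNIV. x $ k)" by simp
  also have "\<dots> = 0" using x by (simp add: std_simplex_def)
  finally have "(\<Sum>k\<in>UNIV. x $ k * ((Q *v x) $ k - fx)) = 0" .
  moreover have "\<forall>k\<in>UNIV. x $ k * ((Q *v x) $ k - fx) \<ge> 0"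
    using x ge by (auto simp: std_simplex_def)
  ultimately have "x $ j * ((Q *v x) $ j - fx) = 0"
    by (simp add: sum_nonneg_eq_0_iff)
  with pos show ?thesis by (simp add: fx_def)
qed


lemma exists_min_support:
  fixes Q :: "real^'n^'n"
  shows "\<exists>x. x \<in> std_simplex \<and> (\<forall>y\<in>std_simplex. x \<bullet> (Q *v x) \<le> y \<bullet> (Q *v y))
     \<and> (\<forall>x'. x' \<in> std_simplex \<and> (\<forall>y\<in>std_simplex. x' \<bullet> (Q *v x') \<le> y \<bullet> (Q *v y))
          \<longrightarrow> card {j. x $ j \<noteq> 0} \<le> card {j. x' $ j \<noteq> 0})"
proof -
  have "continuous_on std_simplex (\<lambda>x::real^'n. x \<bullet> (Q *v x))"
    by (intro continuous_on_inner continuous_on_id matrix_vector_mult_linear_continuous_on[unfolded o_def])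
  then obtain x0 where "x0 \<in> std_simplex" "\<forall>y\<in>std_simplex. x0 \<bullet> (Q *v x0) \<le> y \<bullet> (Q *v y)"
    using continuous_attains_inf[OF compact_simplex] axis_simplex by blast
  then show ?thesis
    using ex_has_least_nat[where P = "\<lambda>x. x \<in> std_simplex \<and> (\<forall>y\<in>std_simplex. x \<bullet> (Q *v x) \<le> y \<bullet> (Q *v y))"
        and m = "\<lambda>x. card {j. x $ j \<noteq> 0}" and k = x0] by blast
qed


lemma concave_alg:
  fixes a b d xi xj :: real
  assumes "a \<le> a + 2 * xj * b + xj^2 * d" "a \<le> a + 2 * (- xi) * b + (- xi)^2 * d"
    "d \<le> 0" "xi > 0" "xj > 0"
  shows "a + 2 * xj * b + xj^2 * d \<le> a"
proof -
  define A where "A = 2 * xj * b + xj^2 * d"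
  define B where "B = 2 * (- xi) * b + (- xi)^2 * d"
  have A: "A \<ge> 0" and B: "B \<ge> 0" using assms(1,2) by (simp_all add: A_def B_def)
  have "xi * A + xj * B = (xi * xj * (xi + xj)) * d"
    by (simp add: A_def B_def algebra_simps power2_eq_square)
  moreover have "(xi * xj * (xi + xj)) * d \<le> 0"
    using assms(3-5) by (intro mult_nonneg_nonpos) auto
  moreover have "xj * B \<ge> 0" using B assms(5) by simp
  ultimately have "xi * A \<le> 0" by linarith
  hence "A \<le> 0" using assms(4) by (simp add: mult_le_0_iff)
  thus ?thesis by (simp add: A_def)
qed

lemma no_bad_pair:
  fixes Q :: "real^'n^'n"
  assumes symQ: "transpose Q = Q" and x: "x \<in> std_simplex"
    and mn: "\<forall>y\<in>std_simplex. x \<bullet> (Q *v x) \<le> y \<bullet> (Q *v y)"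
    and minimal: "\<forall>x'. x' \<in> std_simplex \<and> (\<forall>y\<in>std_simplex. x' \<bullet> (Q *v x') \<le> y \<bullet> (Q *v y))
          \<longrightarrow> card {j. x $ j \<noteq> 0} \<le> card {j. x' $ j \<noteq> 0}"
    and ij: "i \<noteq> j" and xi: "x $ i > 0" and xj: "x $ j > 0"
    and d: "Q $ i $ i + Q $ j $ j - 2 * Q $ i $ j \<le> 0"
  shows False
proof -
  define fx where "fx = x \<bullet> (Q *v x)"
  define w :: "real^'n" where "w = axis i 1 - axis j 1"
  define b where "b = w \<bullet> (Q *v x)"
  define dd where "dd = w \<bullet> (Q *v w)"
  have dd: "dd \<le> 0" using fw[OF symQ, of i j] d by (simp add: dd_def w_def)
  have comp: "(x + t *\<^sub>R w) $ k = x $ k + (if k = i then t else 0) - (if k = j then t else 0)" for t k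
    by (simp add: w_def axis_def)
  have mem: "x + t *\<^sub>R w \<in> std_simplex" if "- x $ i \<le> t" "t \<le> x $ j" for t
  proof -
    have sw: "(\<Sum>k\<in>UNIV. w $ k) = 0"
      unfolding w_def by (simp only: vector_minus_component sum_subtractf sum_axis diff_self)
    have "(\<Sum>k\<in>UNIV. (x + t *\<^sub>R w) $ k) = (\<Sum>k\<in>UNIV. x $ k) + t * (\<Sum>k\<in>UNIV. w $ k)"
      by (simp add: sum.distrib sum_distrib_left)
    also have "\<dots> = 1" using x sw by (simp add: std_simplex_def)
    finally have s1: "(\<Sum>k\<in>UNIV. (x + t *\<^sub>R w) $ k) = 1" .
    have "(x + t *\<^sub>R w) $ k \<ge> 0" for k
      using x that ij unfolding comp by (auto simp: std_simplex_def)
    with s1 show ?thesis by (simp add: std_simplex_def)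
  qed
  define p where "p = x + (x $ j) *\<^sub>R w"
  have pmem: "p \<in> std_simplex" unfolding p_def by (rule mem) (use xi xj in auto)
  have p2mem: "x + (- x $ i) *\<^sub>R w \<in> std_simplex" by (rule mem) (use xi xj in auto)
  have e1: "p \<bullet> (Q *v p) = fx + 2 * x $ j * b + (x $ j)^2 * dd"
    unfolding p_def using expand[OF symQ, of x "x $ j" w] by (simp add: fx_def b_def dd_def)
  have e2: "(x + (- x $ i) *\<^sub>R w) \<bullet> (Q *v (x + (- x $ i) *\<^sub>R w)) = fx + 2 * (- x $ i) * b + (- x $ i)^2 * dd"
    using expand[OF symQ, of x "- x $ i" w] by (simp add: fx_def b_def dd_def)
  have m1: "fx \<le> p \<bullet> (Q *v p)" unfolding fx_def by (rule bspec[OF mn pmem])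
  have m2: "fx \<le> (x + (- x $ i) *\<^sub>R w) \<bullet> (Q *v (x + (- x $ i) *\<^sub>R w))"
    unfolding fx_def by (rule bspec[OF mn p2mem])
  have "fx + 2 * x $ j * b + (x $ j)^2 * dd \<le> fx"
    by (rule concave_alg[OF _ _ dd xi xj]) (use m1 e1 m2 e2 in linarith)+
  hence pf: "p \<bullet> (Q *v p) \<le> fx" using e1 by linarith
  have pmin: "\<forall>y\<in>std_simplex. p \<bullet> (Q *v p) \<le> y \<bullet> (Q *v y)"
  proof
    fix y :: "real^'n" assume "y \<in> std_simplex"
    hence "fx \<le> y \<bullet> (Q *v y)" unfolding fx_def by (rule bspec[OF mn])
    with pf show "p \<bullet> (Q *v p) \<le> y \<bullet> (Q *v y)" by linarith
  qed
  have "{k. p $ k \<noteq> 0} \<subset> {k. x $ k \<noteq> 0}"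
  proof
    show "{k. p $ k \<noteq> 0} \<subseteq> {k. x $ k \<noteq> 0}"
      using xi xj unfolding p_def comp by (auto split: if_splits)
    have "p $ j = 0" using ij unfolding p_def comp by simp
    hence "j \<notin> {k. p $ k \<noteq> 0}" by simp
    moreover have "j \<in> {k. x $ k \<noteq> 0}" using xj by simp
    ultimately show "{k. p $ k \<noteq> 0} \<noteq> {k. x $ k \<noteq> 0}" by blast
  qed
  hence "card {k. p $ k \<noteq> 0} < card {k. x $ k \<noteq> 0}" by (rule psubset_card_mono[rotated]) simp
  moreover have "card {k. x $ k \<noteq> 0} \<le> card {k. p $ k \<noteq> 0}"
    by (rule minimal[rule_format, OF conjI[OF pmem pmin]])
  ultimately show False by linarith
qed


lemma lb1:
  fixes Q :: "real^'n^'n"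
  assumes "milp1_feasible Q M x s y lam"
  shows "x \<in> std_simplex" "x \<bullet> (Q *v x) = lam"
proof -
  note F = assms[unfolded milp1_feasible_def]
  show xs: "x \<in> std_simplex" using F by (simp add: std_simplex_def)
  have Qk: "(Q *v x) $ k = lam + s $ k" for k
  proof -
    have "(Q *v x - lam *\<^sub>R (\<chi> j. 1) - s) $ k = (0::real^'n) $ k" using F by simp
    thus ?thesis by simp
  qed
  have xs0: "x $ k * s $ k = 0" for k
  proof -
    have "y $ k = 0 \<or> y $ k = 1" using F by auto
    thus ?thesis
    proof
      assume "y $ k = 0" hence "x $ k = 0" using F by (metis order_antisym)
      thus ?thesis by simp
    next
      assume "y $ k = 1" hence "s $ k = 0" using F by (metis order_antisym diff_self mult_zero_right)
      thus ?thesis by simp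
    qed
  qed
  have "x \<bullet> (Q *v x) = (\<Sum>k\<in>UNIV. x $ k * (lam + s $ k))" by (simp add: inner_vec_def Qk)
  also have "\<dots> = lam * (\<Sum>k\<in>UNIV. x $ k) + (\<Sum>k\<in>UNIV. x $ k * s $ k)"
    by (simp add: distrib_left sum.distrib sum_distrib_left mult_ac)
  also have "(\<Sum>k\<in>UNIV. x $ k * s $ k) = 0" by (rule sum.neutral) (rule ballI, rule xs0)
  also have "lam * (\<Sum>k\<in>UNIV. x $ k) + 0 = lam" using F by simp
  finally show "x \<bullet> (Q *v x) = lam" .
qed

lemma lb2:
  fixes Q :: "real^'n^'n"
  assumes "milp2_feasible Q U x z y alpha"
  shows "x \<in> std_simplex" "x \<bullet> (Q *v x) \<le> alpha"
proof -
  note F = assms[unfolded milp2_feasible_def]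
  show xs: "x \<in> std_simplex" using F by (simp add: std_simplex_def)
  have xs0: "x $ k * z $ k = 0" for k
  proof -
    have "y $ k = 0 \<or> y $ k = 1" using F by auto
    thus ?thesis
    proof
      assume "y $ k = 0" hence "x $ k = 0" using F by (metis order_antisym)
      thus ?thesis by simp
    next
      assume "y $ k = 1" hence "z $ k = 0" using F by (metis order_antisym diff_self mult_zero_right)
      thus ?thesis by simp
    qed
  qed
  have "x \<bullet> (Q *v x) = (\<Sum>k\<in>UNIV. x $ k * (Q *v x) $ k)" by (simp add: inner_vec_def)
  also have "\<dots> \<le> (\<Sum>k\<in>UNIV. x $ k * (alpha + z $ k))"
    using F by (intro sum_mono mult_left_mono) auto
  also have "\<dots> = alpha * (\<Sum>k\<in>UNIV. x $ k) + (\<Sum>k\<in>UNIV. x $ k * z $ k)"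
    by (simp add: distrib_left sum.distrib sum_distrib_left mult_ac)
  also have "(\<Sum>k\<in>UNIV. x $ k * z $ k) = 0" by (rule sum.neutral) (rule ballI, rule xs0)
  also have "alpha * (\<Sum>k\<in>UNIV. x $ k) + 0 = alpha" using F by simp
  finally show "x \<bullet> (Q *v x) \<le> alpha" .
qed


theorem theorem2:
  fixes Q :: "real ^ 'n ^ 'n" and l :: real and U :: "'n \<Rightarrow> real"
  assumes symQ: "transpose Q = Q"
    and lower: "l \<le> nu Q"
    and U_ge: "\<And>j. U j \<ge> Mbound Q l j"
  shows "is_min_value {lam. \<exists>x s y. milp1_feasible Q (Mbound Q l) x s y lam} (nu Q)
       \<and> is_min_value {lam. \<exists>x s y. milp1_feasible Q (Mbound Q l) x s y lam \<and> cuts Q y} (nu Q)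
       \<and> is_min_value {alpha. \<exists>x z y. milp2_feasible Q U x z y alpha} (nu Q)
       \<and> is_min_value {alpha. \<exists>x z y. milp2_feasible Q U x z y alpha \<and> cuts Q y} (nu Q)"
proof -
  obtain xs where xs: "xs \<in> std_simplex"
    and mn: "\<forall>y\<in>std_simplex. xs \<bullet> (Q *v xs) \<le> y \<bullet> (Q *v y)"
    and minimal: "\<forall>x'. x' \<in> std_simplex \<and> (\<forall>y\<in>std_simplex. x' \<bullet> (Q *v x') \<le> y \<bullet> (Q *v y))
          \<longrightarrow> card {j. xs $ j \<noteq> 0} \<le> card {j. x' $ j \<noteq> 0}"
    using exists_min_support[of Q] by blast
  have nuQ: "nu Q = xs \<bullet> (Q *v xs)"
    unfolding nu_def by (rule cInf_eq_minimum) (use xs mn in auto)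
  have lbx: "\<And>x. x \<in> std_simplex \<Longrightarrow> nu Q \<le> x \<bullet> (Q *v x)" using mn nuQ by simp
  have xs0: "xs $ j \<ge> 0" for j using xs by (simp add: std_simplex_def)
  have Qge: "(Q *v xs) $ j \<ge> nu Q" for j using kkt[OF symQ xs mn] nuQ by simp
  have Qeq: "xs $ j > 0 \<Longrightarrow> (Q *v xs) $ j = nu Q" for j using support_eq[OF symQ xs mn] nuQ by simp
  have Qle: "(Q *v xs) $ j \<le> Max {Q $ i $ j | i. True}" for j
  proof -
    have fin: "finite {Q $ i $ j | i. True}"
    proof -
      have "{Q $ i $ j | i. True} = range (\<lambda>i. Q $ i $ j)" by auto
      thus ?thesis by simp
    qed
    have "(Q *v xs) $ j = (\<Sum>i\<in>UNIV. Q $ j $ i * xs $ i)"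
      by (simp add: matrix_vector_mul_component inner_vec_def)
    also have "\<dots> \<le> (\<Sum>i\<in>UNIV. Max {Q $ i $ j | i. True} * xs $ i)"
    proof (rule sum_mono, rule mult_right_mono)
      fix i
      have "Q $ j $ i = Q $ i $ j" by (rule symQ_comp[OF symQ])
      thus "Q $ j $ i \<le> Max {Q $ i $ j | i. True}" using fin by (auto intro: Max_ge)
      show "0 \<le> xs $ i" by (rule xs0)
    qed
    also have "\<dots> = Max {Q $ i $ j | i. True}"
      using xs by (simp add: sum_distrib_left[symmetric] std_simplex_def)
    finally show ?thesis .
  qed
  define y :: "real^'n" where "y = (\<chi> j. if xs $ j > 0 then 1 else 0)"
  define s :: "real^'n" where "s = Q *v xs - nu Q *\<^sub>R (\<chi> j. 1)"
  have sj: "s $ j = (Q *v xs) $ j - nu Q" for j by (simp add: s_def)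
  have sM: "s $ j \<le> Mbound Q l j * (1 - y $ j)" for j
  proof (cases "xs $ j > 0")
    case True thus ?thesis using Qeq[OF True] by (simp add: sj y_def)
  next
    case False thus ?thesis using Qle[of j] lower by (simp add: sj y_def Mbound_def)
  qed
  have sU: "s $ j \<le> U j * (1 - y $ j)" for j
  proof -
    have "0 \<le> 1 - y $ j" by (simp add: y_def)
    hence "Mbound Q l j * (1 - y $ j) \<le> U j * (1 - y $ j)" using U_ge[of j] by (rule mult_right_mono[rotated])
    thus ?thesis using sM[of j] by linarith
  qed
  have xy: "xs $ j \<le> y $ j" for j using simplex_le1[OF xs, of j] xs0[of j] by (simp add: y_def)
  have sum1: "(\<Sum>j\<in>UNIV. xs $ j) = 1" using xs by (simp add: std_simplex_def)
  have s0: "s $ j \<ge> 0" for j using Qge[of j] by (simp add: sj)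
  have y01: "y $ j \<in> {0, 1}" for j by (simp add: y_def)
  have F1: "milp1_feasible Q (Mbound Q l) xs s y (nu Q)"
    unfolding milp1_feasible_def using sM xy sum1 xs0 s0 y01 by (simp add: s_def)
  have F2: "milp2_feasible Q U xs s y (nu Q)"
    unfolding milp2_feasible_def using sU xy sum1 xs0 s0 y01 by (simp add: sj)
  have C: "cuts Q y"
    unfolding cuts_def
  proof (intro allI impI)
    fix i j assume h: "i \<noteq> j \<and> Q $ i $ i + Q $ j $ j - 2 * Q $ i $ j \<le> 0"
    have "\<not> (xs $ i > 0 \<and> xs $ j > 0)"
      using no_bad_pair[OF symQ xs mn minimal] h by blast
    thus "y $ i + y $ j \<le> 1" by (auto simp: y_def)
  qed
  have L1: "nu Q \<le> lam" if "milp1_feasible Q M x s' y' lam" for M x s' y' lam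
    using lb1[OF that] lbx by metis
  have L2: "nu Q \<le> alpha" if "milp2_feasible Q U x z y' alpha" for x z y' alpha
    using lb2[OF that] lbx by (meson order_trans)
  have A1: "nu Q \<in> {lam. \<exists>x s y. milp1_feasible Q (Mbound Q l) x s y lam}" using F1 by blast
  have A2: "nu Q \<in> {lam. \<exists>x s y. milp1_feasible Q (Mbound Q l) x s y lam \<and> cuts Q y}" using F1 C by blast
  have A3: "nu Q \<in> {alpha. \<exists>x z y. milp2_feasible Q U x z y alpha}" using F2 by blast
  have A4: "nu Q \<in> {alpha. \<exists>x z y. milp2_feasible Q U x z y alpha \<and> cuts Q y}" using F2 C by blast
  have B1: "\<forall>w\<in>{lam. \<exists>x s y. milp1_feasible Q (Mbound Q l) x s y lam}. nu Q \<le> w"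
  proof
    fix w assume "w \<in> {lam. \<exists>x s y. milp1_feasible Q (Mbound Q l) x s y lam}"
    then obtain a b c where "milp1_feasible Q (Mbound Q l) a b c w" by blast
    thus "nu Q \<le> w" by (rule L1)
  qed
  have B2: "\<forall>w\<in>{lam. \<exists>x s y. milp1_feasible Q (Mbound Q l) x s y lam \<and> cuts Q y}. nu Q \<le> w"
  proof
    fix w assume "w \<in> {lam. \<exists>x s y. milp1_feasible Q (Mbound Q l) x s y lam \<and> cuts Q y}"
    then obtain a b c where "milp1_feasible Q (Mbound Q l) a b c w" by blast
    thus "nu Q \<le> w" by (rule L1)
  qed
  have B3: "\<forall>w\<in>{alpha. \<exists>x z y. milp2_feasible Q U x z y alpha}. nu Q \<le> w"
  proof
    fix w assume "w \<in> {alpha. \<exists>x z y. milp2_feasible Q U x z y alpha}"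
    then obtain a b c where "milp2_feasible Q U a b c w" by blast
    thus "nu Q \<le> w" by (rule L2)
  qed
  have B4: "\<forall>w\<in>{alpha. \<exists>x z y. milp2_feasible Q U x z y alpha \<and> cuts Q y}. nu Q \<le> w"
  proof
    fix w assume "w \<in> {alpha. \<exists>x z y. milp2_feasible Q U x z y alpha \<and> cuts Q y}"
    then obtain a b c where "milp2_feasible Q U a b c w" by blast
    thus "nu Q \<le> w" by (rule L2)
  qed
  show ?thesis
    unfolding is_min_value_def by (intro conjI A1 A2 A3 A4 B1 B2 B3 B4)
qed

end
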